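(* Let $Q$ be a nontrivial qubit stabilizer code on $n$ physical qubits, and suppose the transversal rotation $Z(\theta_1)\otimes Z(\theta_2)\otimes\cdots\otimes Z(\theta_n)$, with arbitrary real angles $\theta_j$, implements a nontrivial logical gate on $Q$. Then, up to single-qubit factors whose combined action on the code is the logical identity, the transversal rotation is of the form $Z(a_1/2^{k})\otimes\cdots\otimes Z(a_n/2^{k})$ for integers $a_1,\dots,a_n$ and $k\ge 0$; i.e. the implemented logical gate coincides with the one implemented by such a rotation with all angles of the form $a/2^k$.
   Context: A stabilizer code on $n$ qubits is the common $+1$ eigenspace of an abelian subgroup $\mathcal{S}$ of the $n$-qubit Pauli group not containing $-I$. Logical operators are elements of the normalizer of $\mathcal{S}$ not in $\mathcal{S}$; the distance is the minimum weight of a Pauli logical operator; nontrivial means distance at least $2$. $Z(\theta)=\mathrm{diag}(1,e^{i\pi\theta})$. A transversal rotation implements a nontrivial logical gate if it maps the code space to itself and acts on it as a logical unitary that is not the identity up to global phase. *)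

theory Defs
  imports Complex_Main
begin

text \<open>Computational basis of n qubits: bit strings (bool lists) of length n.
  Operators are matrices indexed by bit strings, vanishing outside the basis;
  states are functions from bit strings to complex amplitudes.\<close>

definition bitstrs :: "nat \<Rightarrow> bool list set" where
  "bitstrs n = {b. length b = n}"

type_synonym qmat = "bool list \<Rightarrow> bool list \<Rightarrow> complex"
type_synonym qvec = "bool list \<Rightarrow> complex"

definition mmult :: "nat \<Rightarrow> qmat \<Rightarrow> qmat \<Rightarrow> qmat" where
  "mmult n A B = (\<lambda>b d. \<Sum>c\<in>bitstrs n. A b c * B c d)"

definition mapply :: "nat \<Rightarrow> qmat \<Rightarrow> qvec \<Rightarrow> qvec" where
  "mapply n A v = (\<lambda>b. \<Sum>c\<in>bitstrs n. A b c * v c)"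

definition idm :: "nat \<Rightarrow> qmat" where
  "idm n = (\<lambda>b d. if length b = n \<and> b = d then 1 else 0)"

definition mneg :: "qmat \<Rightarrow> qmat" where
  "mneg A = (\<lambda>b d. - A b d)"

definition madj :: "qmat \<Rightarrow> qmat" where
  "madj A = (\<lambda>b d. cnj (A d b))"

text \<open>The Pauli operator i^c X^x Z^z, acting as |b'> \<mapsto> i^c (-1)^(z.b') |b' xor x>.\<close>
definition pauli_mat :: "nat \<Rightarrow> nat \<Rightarrow> bool list \<Rightarrow> bool list \<Rightarrow> qmat" where
  "pauli_mat n c x z = (\<lambda>b b'.
     if length b = n \<and> length b' = n \<and> b = map2 (\<noteq>) x b'
     then \<i> ^ c * (-1) ^ length (filter id (map2 (\<and>) z b'))
     else 0)"

definition pauli_group :: "nat \<Rightarrow> qmat set" where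
  "pauli_group n = {pauli_mat n c x z | c x z. length x = n \<and> length z = n}"

definition pweight :: "nat \<Rightarrow> bool list \<Rightarrow> bool list \<Rightarrow> nat" where
  "pweight n x z = card {j. j < n \<and> (x ! j \<or> z ! j)}"

definition stabilizer_group :: "nat \<Rightarrow> qmat set \<Rightarrow> bool" where
  "stabilizer_group n S \<longleftrightarrow>
     S \<subseteq> pauli_group n \<and> idm n \<in> S \<and>
     (\<forall>A\<in>S. \<forall>B\<in>S. mmult n A B \<in> S) \<and>
     (\<forall>A\<in>S. madj A \<in> S) \<and>
     (\<forall>A\<in>S. \<forall>B\<in>S. mmult n A B = mmult n B A) \<and>
     mneg (idm n) \<notin> S"

definition codespace :: "nat \<Rightarrow> qmat set \<Rightarrow> qvec set" where
  "codespace n S = {v. (\<forall>b. length b \<noteq> n \<longrightarrow> v b = 0) \<and> (\<forall>g\<in>S. mapply n g v = v)}"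

definition is_logical :: "nat \<Rightarrow> qmat set \<Rightarrow> nat \<Rightarrow> bool list \<Rightarrow> bool list \<Rightarrow> bool" where
  "is_logical n S c x z \<longleftrightarrow>
     length x = n \<and> length z = n \<and>
     (\<lambda>A. mmult n (mmult n (pauli_mat n c x z) A) (madj (pauli_mat n c x z))) ` S = S \<and>
     (\<forall>c'. pauli_mat n c' x z \<notin> S)"

text \<open>Nontrivial: distance at least 2, i.e. every logical operator has weight \<ge> 2.\<close>
definition nontrivial_code :: "nat \<Rightarrow> qmat set \<Rightarrow> bool" where
  "nontrivial_code n S \<longleftrightarrow> (\<forall>c x z. is_logical n S c x z \<longrightarrow> pweight n x z \<ge> 2)"

text \<open>Transversal rotation Z(\<theta>_0) \<otimes> ... \<otimes> Z(\<theta>_(n-1)), Z(\<theta>) = diag(1, e^(i \<pi> \<theta>)).\<close>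
definition zrot :: "nat \<Rightarrow> (nat \<Rightarrow> real) \<Rightarrow> qmat" where
  "zrot n \<theta> = (\<lambda>b d. if length b = n \<and> b = d
       then (\<Prod>j<n. if b ! j then cis (pi * \<theta> j) else 1) else 0)"

definition implements_nontrivial_logical :: "nat \<Rightarrow> qmat set \<Rightarrow> qmat \<Rightarrow> bool" where
  "implements_nontrivial_logical n S U \<longleftrightarrow>
     (\<forall>v\<in>codespace n S. mapply n U v \<in> codespace n S) \<and>
     \<not> (\<exists>c. \<forall>v\<in>codespace n S. mapply n U v = (\<lambda>b. c * v b))"

end

theory Submission
  imports Defs
begin


definition xr :: "bool list \<Rightarrow> bool list \<Rightarrow> bool list" where
  "xr x b = map2 (\<noteq>) x b"

lemma xr_fold: "map2 (\<noteq>) x b = xr x b" by (simp add: xr_def)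

definition sg :: "bool list \<Rightarrow> bool list \<Rightarrow> complex" where
  "sg z b = (-1) ^ length (filter id (map2 (\<and>) z b))"

lemma finite_bitstrs: "finite (bitstrs n)"
proof -
  have "bitstrs n = {xs. set xs \<subseteq> UNIV \<and> length xs = n}" by (auto simp: bitstrs_def)
  then show ?thesis using finite_lists_length_eq[of "UNIV::bool set" n] by simp
qed

lemma xr_len[simp]: "length (xr x b) = min (length x) (length b)" by (simp add: xr_def)

lemma xr_nth[simp]: "j < length x \<Longrightarrow> j < length b \<Longrightarrow> xr x b ! j = (x ! j \<noteq> b ! j)"
  by (simp add: xr_def)

lemma xr_xr: "length x = length b \<Longrightarrow> xr x (xr x b) = b"
  by (rule nth_equalityI) auto

lemma xr_comm: "xr x b = xr b x"
  by (rule nth_equalityI) auto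

lemma xr_eq_iff: "length x = n \<Longrightarrow> length b = n \<Longrightarrow> length b' = n \<Longrightarrow>
   (b = xr x b') = (b' = xr x b)"
  using xr_xr by (metis min.idem xr_len)

lemma pauli_alt: "length x = n \<Longrightarrow> pauli_mat n c x z b b' =
   (if length b = n \<and> b' = xr x b then \<i> ^ c * sg z b' else 0)"
  unfolding pauli_mat_def sg_def xr_fold
  using xr_eq_iff[of x n b b'] by auto

lemma mapply_pauli: "length x = n \<Longrightarrow>
  mapply n (pauli_mat n c x z) v b = (if length b = n then \<i> ^ c * sg z (xr x b) * v (xr x b) else 0)"
proof -
  assume lx: "length x = n"
  have "mapply n (pauli_mat n c x z) v b =
    (\<Sum>e\<in>bitstrs n. if e = xr x b then (if length b = n then \<i> ^ c * sg z e * v e else 0) else 0)"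
    unfolding mapply_def by (rule sum.cong) (auto simp: pauli_alt[OF lx])
  also have "\<dots> = (if length b = n then \<i> ^ c * sg z (xr x b) * v (xr x b) else 0)"
    using lx by (cases "length b = n") (simp_all only: sum.delta[OF finite_bitstrs], auto simp: bitstrs_def)
  finally show ?thesis .
qed



definition GX :: "nat \<Rightarrow> qmat set \<Rightarrow> bool list set" where
  "GX n S = {x. \<exists>c z. length x = n \<and> length z = n \<and> pauli_mat n c x z \<in> S}"

definition LS :: "nat \<Rightarrow> qmat set \<Rightarrow> bool list set" where
  "LS n S = {b. \<exists>v\<in>codespace n S. v b \<noteq> 0}"

definition psi :: "nat \<Rightarrow> (nat \<Rightarrow> real) \<Rightarrow> bool list \<Rightarrow> real" where
  "psi n \<theta> b = (\<Sum>j<n. if b ! j then \<theta> j else 0)"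

lemma S_pauli: "stabilizer_group n S \<Longrightarrow> A \<in> S \<Longrightarrow>
   \<exists>c x z. length x = n \<and> length z = n \<and> A = pauli_mat n c x z"
  unfolding stabilizer_group_def pauli_group_def by blast

lemma cw_len: "v \<in> codespace n S \<Longrightarrow> length b \<noteq> n \<Longrightarrow> v b = 0"
  unfolding codespace_def by auto

lemma cw_eq: assumes "v \<in> codespace n S" "pauli_mat n c x z \<in> S" "length x = n" "length b = n"
  shows "v b = \<i> ^ c * sg z (xr x b) * v (xr x b)"
proof -
  have "mapply n (pauli_mat n c x z) v = v" using assms(1,2) unfolding codespace_def by auto
  then have "v b = mapply n (pauli_mat n c x z) v b" by simp
  then show ?thesis using assms(3,4) by (simp add: mapply_pauli)
qed

lemma sg_nz: "sg z b \<noteq> 0" by (simp add: sg_def)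

lemma LS_len: "b \<in> LS n S \<Longrightarrow> length b = n"
  unfolding LS_def using cw_len by blast

lemma LS_xr: assumes "b \<in> LS n S" "x \<in> GX n S" shows "xr x b \<in> LS n S"
proof -
  obtain v where v: "v \<in> codespace n S" "v b \<noteq> 0" using assms(1) unfolding LS_def by auto
  obtain c z where cz: "length x = n" "length z = n" "pauli_mat n c x z \<in> S"
    using assms(2) unfolding GX_def by auto
  have "v b = \<i> ^ c * sg z (xr x b) * v (xr x b)"
    using cw_eq[OF v(1) cz(3) cz(1)] LS_len[OF assms(1)] by simp
  then have "v (xr x b) \<noteq> 0" using v(2) by auto
  then show ?thesis using v(1) unfolding LS_def by auto
qed

lemma prod_cis: "(\<Prod>j<(n::nat). cis (f j)) = cis (\<Sum>j<n. f j)"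
  by (induction n) (auto simp: cis_mult)

lemma zrot_alt: "zrot n \<theta> b d = (if length b = n \<and> b = d then cis (pi * psi n \<theta> b) else 0)"
proof -
  have "(\<Prod>j<n. if b ! j then cis (pi * \<theta> j) else 1) = (\<Prod>j<n. cis (pi * (if b ! j then \<theta> j else 0)))"
    by (rule prod.cong) auto
  also have "\<dots> = cis (pi * psi n \<theta> b)" by (simp add: prod_cis psi_def sum_distrib_left)
  finally show ?thesis unfolding zrot_def by auto
qed

lemma mapply_zrot: "mapply n (zrot n \<theta>) v b = (if length b = n then cis (pi * psi n \<theta> b) * v b else 0)"
proof (cases "length b = n")
  case True
  have "mapply n (zrot n \<theta>) v b = (\<Sum>e\<in>bitstrs n. if e = b then cis (pi * psi n \<theta> b) * v e else 0)"
    unfolding mapply_def by (rule sum.cong) (auto simp: zrot_alt True)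
  also have "\<dots> = cis (pi * psi n \<theta> b) * v b"
    by (simp only: sum.delta[OF finite_bitstrs]) (simp add: bitstrs_def True)
  finally show ?thesis using True by simp
next
  case False
  then show ?thesis unfolding mapply_def by (simp add: zrot_alt)
qed

lemma phase_inv: assumes "implements_nontrivial_logical n S (zrot n \<theta>)"
  "b \<in> LS n S" "x \<in> GX n S"
  shows "cis (pi * psi n \<theta> (xr x b)) = cis (pi * psi n \<theta> b)"
proof -
  obtain v where v: "v \<in> codespace n S" "v b \<noteq> 0" using assms(2) unfolding LS_def by auto
  obtain c z where cz: "length x = n" "length z = n" "pauli_mat n c x z \<in> S"
    using assms(3) unfolding GX_def by auto
  have lb: "length b = n" using LS_len[OF assms(2)] .
  have lxb: "length (xr x b) = n" using lb cz by simp
  define w where "w = mapply n (zrot n \<theta>) v"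
  have w: "w \<in> codespace n S" using assms(1) v(1) unfolding implements_nontrivial_logical_def w_def by auto
  have e1: "v b = \<i> ^ c * sg z (xr x b) * v (xr x b)" using cw_eq[OF v(1) cz(3) cz(1) lb] .
  have e2: "w b = \<i> ^ c * sg z (xr x b) * w (xr x b)" using cw_eq[OF w cz(3) cz(1) lb] .
  have "cis (pi * psi n \<theta> b) * v b = cis (pi * psi n \<theta> (xr x b)) * (\<i> ^ c * sg z (xr x b) * v (xr x b))"
    using e2 lb lxb by (simp add: w_def mapply_zrot)
  also have "\<dots> = cis (pi * psi n \<theta> (xr x b)) * v b" using e1 by simp
  finally show ?thesis using v(2) by simp
qed



definition ej :: "nat \<Rightarrow> nat \<Rightarrow> bool list" where
  "ej n j = map (\<lambda>i. i = j) [0..<n]"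

lemma xr_zeros: "length b = n \<Longrightarrow> xr (replicate n False) b = b"
  by (rule nth_equalityI) auto

lemma sg_ej: assumes "j < n" "length b = n"
  shows "sg (ej n j) b = (if b ! j then -1 else 1)"
proof -
  have "length (filter id (map2 (\<and>) (ej n j) b)) = card {i. i < length (map2 (\<and>) (ej n j) b) \<and> id (map2 (\<and>) (ej n j) b ! i)}"
    by (rule length_filter_conv_card)
  also have "{i. i < length (map2 (\<and>) (ej n j) b) \<and> id (map2 (\<and>) (ej n j) b ! i)} = (if b ! j then {j} else {})"
    using assms by (auto simp: ej_def)
  finally have cnt: "length (filter id (map2 (\<and>) (ej n j) b)) = card (if b ! j then {j} else {})" .
  show ?thesis unfolding sg_def cnt by simp
qed

lemma sum_single: "length b = n \<Longrightarrow>
  (\<Sum>e\<in>bitstrs n. if e = b then f e else 0) = f b"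
  by (simp only: sum.delta[OF finite_bitstrs]) (simp add: bitstrs_def)

lemma conj_Z: assumes "j < n" "length x = n" "length z = n" "\<not> x ! j"
  shows "mmult n (mmult n (pauli_mat n 0 (replicate n False) (ej n j)) (pauli_mat n c x z))
           (madj (pauli_mat n 0 (replicate n False) (ej n j))) = pauli_mat n c x z"
proof (intro ext)
  fix b d
  define Z where "Z = pauli_mat n 0 (replicate n False) (ej n j)"
  define A where "A = pauli_mat n c x z"
  define s where "s = (\<lambda>b::bool list. if b ! j then -1 else (1::complex))"
  have Zb: "Z b e = (if length b = n \<and> e = b then s b else 0)" for b e
    unfolding Z_def s_def using assms(1) by (auto simp: pauli_alt xr_zeros sg_ej)
  have Zadj: "madj Z e d = (if length d = n \<and> e = d then s d else 0)" for e d
    unfolding madj_def Zb s_def by auto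
  have A0: "A b d \<noteq> 0 \<Longrightarrow> length b = n \<and> length d = n \<and> d = xr x b" for b d
    unfolding A_def using assms(2) by (auto simp: pauli_alt split: if_splits)
  have m1: "mmult n Z A b' d' = (if length b' = n then s b' * A b' d' else 0)" for b' d'
  proof (cases "length b' = n")
    case True
    have "mmult n Z A b' d' = (\<Sum>e\<in>bitstrs n. if e = b' then s b' * A e d' else 0)"
      unfolding mmult_def by (rule sum.cong) (auto simp: Zb True)
    then show ?thesis using True sum_single[OF True, of "\<lambda>e. s b' * A e d'"] by simp
  next
    case False then show ?thesis unfolding mmult_def by (simp add: Zb)
  qed
  have m2: "mmult n (mmult n Z A) (madj Z) b d = (if length d = n then mmult n Z A b d * s d else 0)"
  proof (cases "length d = n")
    case True
    have "mmult n (mmult n Z A) (madj Z) b d = (\<Sum>e\<in>bitstrs n. if e = d then mmult n Z A b e * s d else 0)"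
      unfolding mmult_def[of n "mmult n Z A"] by (rule sum.cong) (auto simp: Zadj True)
    then show ?thesis using True sum_single[OF True, of "\<lambda>e. mmult n Z A b e * s d"] by simp
  next
    case False then show ?thesis unfolding mmult_def[of n "mmult n Z A"] by (simp add: Zadj)
  qed
  show "mmult n (mmult n Z A) (madj Z) b d = A b d"
  proof (cases "A b d = 0")
    case True
    then show ?thesis using m1 m2 by simp
  next
    case False
    from A0[OF False] have l: "length b = n" "length d = n" "d = xr x b" by auto
    have "d ! j = b ! j" using l assms by simp
    then have "s b * s d = 1" unfolding s_def by simp
    then show ?thesis using m1 m2 l by (simp add: algebra_simps)
  qed
qed

lemma coverage:
  assumes SG: "stabilizer_group n S" and NT: "nontrivial_code n S" and j: "j < n"
    and nc: "\<forall>x\<in>GX n S. \<not> x ! j"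
    and b: "b \<in> LS n S" and b': "b' \<in> LS n S"
  shows "b ! j = b' ! j"
proof (rule ccontr)
  assume ne: "b ! j \<noteq> b' ! j"
  define Z where "Z = pauli_mat n 0 (replicate n False) (ej n j)"
  have lej: "length (ej n j) = n" by (simp add: ej_def)
  have fix1: "(\<lambda>A. mmult n (mmult n Z A) (madj Z)) A = A" if AS: "A \<in> S" for A
  proof -
    obtain c x z where cxz: "length x = n" "length z = n" "A = pauli_mat n c x z"
      using S_pauli[OF SG AS] by blast
    have "x \<in> GX n S" using cxz AS unfolding GX_def by blast
    then have "\<not> x ! j" using nc by blast
    then show ?thesis using conj_Z[OF j cxz(1,2)] cxz(3) unfolding Z_def by simp
  qed
  have img: "(\<lambda>A. mmult n (mmult n Z A) (madj Z)) ` S = S"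
    using fix1 by (simp add: image_cong[of S S _ id] )
  have notin: "pauli_mat n c' (replicate n False) (ej n j) \<notin> S" for c'
  proof
    assume inS: "pauli_mat n c' (replicate n False) (ej n j) \<in> S"
    have key: "\<i> ^ c' * sg (ej n j) bb = 1" if bbL: "bb \<in> LS n S" for bb
    proof -
      obtain v where v: "v \<in> codespace n S" "v bb \<noteq> 0" using bbL unfolding LS_def by auto
      have lb: "length bb = n" using LS_len[OF bbL] .
      have "v bb = \<i> ^ c' * sg (ej n j) bb * v bb"
        using cw_eq[OF v(1) inS _ lb] lb by (simp add: xr_zeros)
      then show ?thesis using v(2) by simp
    qed
    have "\<i> ^ c' * sg (ej n j) b = 1" "\<i> ^ c' * sg (ej n j) b' = 1" using key b b' by auto
    then show False using ne j LS_len[OF b] LS_len[OF b'] by (auto simp: sg_ej split: if_splits)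
  qed
  have "is_logical n S 0 (replicate n False) (ej n j)"
    unfolding is_logical_def using img notin lej unfolding Z_def by auto
  then have "pweight n (replicate n False) (ej n j) \<ge> 2" using NT unfolding nontrivial_code_def by blast
  moreover have "{i. i < n \<and> (replicate n False ! i \<or> ej n j ! i)} = {j}" using j by (auto simp: ej_def)
  ultimately show False unfolding pweight_def by simp
qed



lemma sg_prod: "length z = n \<Longrightarrow> length b = n \<Longrightarrow>
  sg z b = (\<Prod>i<n. if z ! i \<and> b ! i then -1 else 1)"
proof -
  assume lz: "length z = n" and lb: "length b = n"
  have "length (filter id (map2 (\<and>) z b)) = card {i. i < length (map2 (\<and>) z b) \<and> id (map2 (\<and>) z b ! i)}"
    by (rule length_filter_conv_card)
  also have "{i. i < length (map2 (\<and>) z b) \<and> id (map2 (\<and>) z b ! i)} = {i \<in> {..<n}. z ! i \<and> b ! i}"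
    using lz lb by auto
  finally have cnt: "length (filter id (map2 (\<and>) z b)) = card {i \<in> {..<n}. z ! i \<and> b ! i}" .
  have "(\<Prod>i<n. if z ! i \<and> b ! i then -1 else (1::complex)) = (\<Prod>i\<in>{i \<in> {..<n}. z ! i \<and> b ! i}. -1)"
    by (simp only: prod.inter_filter[OF finite_lessThan])
  also have "\<dots> = (-1) ^ card {i \<in> {..<n}. z ! i \<and> b ! i}" by simp
  finally show ?thesis unfolding sg_def cnt by simp
qed

lemma sg_xr: "length z = n \<Longrightarrow> length a = n \<Longrightarrow> length b = n \<Longrightarrow>
  sg z (xr a b) = sg z a * sg z b"
  by (simp add: sg_prod prod.distrib[symmetric]) (rule prod.cong, auto)

lemma sg_sq: "sg z b * sg z b = 1"
  unfolding sg_def by (simp add: power_mult_distrib[symmetric])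

lemma ipow_mod: "\<i> ^ c = \<i> ^ (c mod 4)"
proof -
  have "\<i> ^ c = \<i> ^ (4 * (c div 4) + c mod 4)" by simp
  also have "\<dots> = (\<i> ^ 4) ^ (c div 4) * \<i> ^ (c mod 4)" by (simp only: power_add power_mult)
  finally show ?thesis by simp
qed

lemma finite_S: assumes "stabilizer_group n S" shows "finite S"
proof -
  have "S \<subseteq> (\<lambda>(c,x,z). pauli_mat n c x z) ` ({..<4} \<times> bitstrs n \<times> bitstrs n)"
  proof
    fix A assume "A \<in> S"
    then obtain c x z where cxz: "length x = n" "length z = n" "A = pauli_mat n c x z"
      using S_pauli[OF assms] by blast
    have Am: "A = pauli_mat n (c mod 4) x z" unfolding cxz(3) pauli_mat_def by (simp only: ipow_mod[of c, symmetric])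
    show "A \<in> (\<lambda>(c,x,z). pauli_mat n c x z) ` ({..<4} \<times> bitstrs n \<times> bitstrs n)"
      by (rule image_eqI[where x="(c mod 4, x, z)"]) (use Am cxz in \<open>auto simp: bitstrs_def\<close>)
  qed
  then show ?thesis by (rule finite_subset) (simp add: finite_bitstrs)
qed

lemma xr_zeros2: "length b = n \<Longrightarrow> xr b (replicate n False) = b"
  by (rule nth_equalityI) auto

lemma mmult_assoc: "mmult n (mmult n A B) C = mmult n A (mmult n B C)"
  unfolding mmult_def
  by (intro ext) (simp add: sum_distrib_left sum_distrib_right mult.assoc, rule sum.swap)

lemma pauli_alt2: "length x = n \<Longrightarrow> pauli_mat n c x z e b =
   (if length b = n \<and> e = xr x b then \<i> ^ c * sg z b else 0)"
  by (auto simp: pauli_alt xr_xr)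

lemma adj_pauli: assumes "length x = n"
  shows "mmult n (madj (pauli_mat n c x z)) (pauli_mat n c x z) = idm n"
proof (intro ext)
  fix b d
  let ?g = "pauli_mat n c x z"
  show "mmult n (madj ?g) ?g b d = idm n b d"
  proof (cases "length b = n")
    case True
    have "mmult n (madj ?g) ?g b d = (\<Sum>e\<in>bitstrs n. if e = xr x b then cnj (\<i> ^ c * sg z b) * ?g e d else 0)"
      unfolding mmult_def madj_def by (rule sum.cong) (auto simp: pauli_alt2[OF assms] True)
    also have "\<dots> = cnj (\<i> ^ c * sg z b) * ?g (xr x b) d"
      by (rule sum_single) (simp add: True assms)
    also have "\<dots> = idm n b d"
    proof -
      have "(d = xr x (xr x b)) = (d = b)" using True assms by (simp add: xr_xr)
      moreover have "cnj (\<i> ^ c * sg z b) * (\<i> ^ c * sg z b) = 1"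
      proof -
        have "cmod (\<i> ^ c * sg z b) = 1" by (simp add: norm_mult norm_power sg_def)
        then show ?thesis using complex_norm_square[of "\<i> ^ c * sg z b"] by (simp add: mult.commute)
      qed
      ultimately show ?thesis using True assms by (auto simp: pauli_alt idm_def)
    qed
    finally show ?thesis .
  next
    case False
    then show ?thesis unfolding mmult_def madj_def idm_def using assms by (auto simp: pauli_alt intro!: sum.neutral)
  qed
qed

lemma idm_mult: "length x = n \<Longrightarrow> mmult n (idm n) (pauli_mat n c x z) = pauli_mat n c x z"
proof (intro ext)
  fix b d assume lx: "length x = n"
  show "mmult n (idm n) (pauli_mat n c x z) b d = pauli_mat n c x z b d"
  proof (cases "length b = n")
    case True
    have "mmult n (idm n) (pauli_mat n c x z) b d = (\<Sum>e\<in>bitstrs n. if e = b then pauli_mat n c x z e d else 0)"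
      unfolding mmult_def idm_def by (rule sum.cong) (auto simp: True)
    then show ?thesis using sum_single[OF True] by simp
  next
    case False
    then show ?thesis unfolding mmult_def idm_def using lx by (simp add: pauli_alt)
  qed
qed

context
  fixes n S
  assumes SG: "stabilizer_group n S"
begin

lemma S_mult: "A \<in> S \<Longrightarrow> B \<in> S \<Longrightarrow> mmult n A B \<in> S"
  using SG unfolding stabilizer_group_def by blast

lemma S_adj: "A \<in> S \<Longrightarrow> madj A \<in> S"
  using SG unfolding stabilizer_group_def by blast

lemma S_idm: "idm n \<in> S"
  using SG unfolding stabilizer_group_def by blast

lemma S_left_inv: "g \<in> S \<Longrightarrow> h \<in> S \<Longrightarrow> mmult n (madj g) (mmult n g h) = h"
proof -
  assume g: "g \<in> S" and h: "h \<in> S"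
  obtain c x z where g': "length x = n" "g = pauli_mat n c x z" using S_pauli[OF SG g] by blast
  obtain c' x' z' where h': "length x' = n" "h = pauli_mat n c' x' z'" using S_pauli[OF SG h] by blast
  show ?thesis
    by (simp add: mmult_assoc[symmetric] g' h' adj_pauli idm_mult)
qed

lemma S_perm: assumes g: "g \<in> S" shows "(mmult n g) ` S = S" "inj_on (mmult n g) S"
proof -
  show inj: "inj_on (mmult n g) S"
    by (rule inj_on_inverseI[of _ "mmult n (madj g)"]) (use S_left_inv[OF g] in auto)
  have "(mmult n g) ` S \<subseteq> S" using S_mult[OF g] by auto
  moreover have "card ((mmult n g) ` S) = card S" using card_image[OF inj] .
  ultimately show "(mmult n g) ` S = S" using card_subset_eq[OF finite_S[OF SG]] by blast
qed

definition Lp :: "bool list set" where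
  "Lp = {b. length b = n \<and> (\<forall>h\<in>S. h b b = 0 \<or> h b b = 1)}"

lemma LS_Lp: "LS n S \<subseteq> Lp"
proof
  fix b assume bL: "b \<in> LS n S"
  obtain v where v: "v \<in> codespace n S" "v b \<noteq> 0" using bL unfolding LS_def by auto
  have lb: "length b = n" using LS_len[OF bL] .
  have "h b b = 0 \<or> h b b = 1" if hS: "h \<in> S" for h
  proof -
    obtain c x z where cxz: "length x = n" "length z = n" "h = pauli_mat n c x z"
      using S_pauli[OF SG hS] by blast
    show ?thesis
    proof (cases "b = xr x b")
      case True
      have "v b = \<i> ^ c * sg z b * v b" using cw_eq[OF v(1) _ cxz(1) lb] hS cxz(3) True by metis
      then have "\<i> ^ c * sg z b = 1" using v(2) by simp
      then show ?thesis using cxz lb True by (simp add: pauli_alt)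
    next
      case False
      then show ?thesis using cxz lb by (simp add: pauli_alt)
    qed
  qed
  then show "b \<in> Lp" unfolding Lp_def using lb by auto
qed

lemma Lp_LS: "Lp \<subseteq> LS n S"
proof
  fix b assume bL: "b \<in> Lp"
  have lb: "length b = n" using bL unfolding Lp_def by auto
  define w where "w = (\<lambda>b'. \<Sum>h\<in>S. h b' b)"
  have w_len: "w b' = 0" if "length b' \<noteq> n" for b'
    unfolding w_def
  proof (rule sum.neutral, intro ballI)
    fix h assume "h \<in> S"
    then obtain c x z where "length x = n" "h = pauli_mat n c x z" using S_pauli[OF SG] by blast
    then show "h b' b = 0" using that by (simp add: pauli_alt)
  qed
  have w_fix: "mapply n g w = w" if gS: "g \<in> S" for g
  proof (intro ext)
    fix b'
    have "mapply n g w b' = (\<Sum>h\<in>S. mmult n g h b' b)"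
      unfolding mapply_def w_def mmult_def
      by (simp add: sum_distrib_left, rule sum.swap)
    also have "\<dots> = (\<Sum>h\<in>(mmult n g) ` S. h b' b)"
      by (simp add: sum.reindex[OF S_perm(2)[OF gS]])
    also have "\<dots> = w b'" unfolding w_def using S_perm(1)[OF gS] by simp
    finally show "mapply n g w b' = w b'" .
  qed
  have wC: "w \<in> codespace n S" unfolding codespace_def using w_len w_fix by auto
  have "Re (idm n b b) \<le> Re (w b)"
    unfolding w_def Re_sum
  proof (rule member_le_sum[OF S_idm _ finite_S[OF SG]])
    fix h assume "h \<in> S - {idm n}"
    then have "h b b = 0 \<or> h b b = 1" using bL unfolding Lp_def by auto
    then show "0 \<le> Re (h b b)" by auto
  qed
  then have "w b \<noteq> 0" using lb by (auto simp: idm_def)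
  then show "b \<in> LS n S" unfolding LS_def using wC by auto
qed

lemma LS_eq: "LS n S = Lp" using LS_Lp Lp_LS by auto

lemma xr_self_iff: "length x = n \<Longrightarrow> length b = n \<Longrightarrow> (b = xr x b) = (\<forall>i<n. \<not> x ! i)"
proof
  assume "length x = n" "length b = n" "b = xr x b"
  then show "\<forall>i<n. \<not> x ! i" by (metis xr_nth)
next
  assume "length x = n" "length b = n" "\<forall>i<n. \<not> x ! i"
  then show "b = xr x b" by (intro nth_equalityI) auto
qed

lemma LS_affine: assumes "b1 \<in> LS n S" "b2 \<in> LS n S" "b3 \<in> LS n S"
  shows "xr b1 (xr b2 b3) \<in> LS n S"
proof -
  have l: "length b1 = n" "length b2 = n" "length b3 = n" using assms LS_len by auto
  define b where "b = xr b1 (xr b2 b3)"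
  have lb: "length b = n" using l by (simp add: b_def)
  have "h b b = 0 \<or> h b b = 1" if hS: "h \<in> S" for h
  proof -
    obtain c x z where cxz: "length x = n" "length z = n" "h = pauli_mat n c x z"
      using S_pauli[OF SG hS] by blast
    show ?thesis
    proof (cases "\<forall>i<n. \<not> x ! i")
      case False
      then show ?thesis using cxz lb xr_self_iff[of x b] False by (simp add: pauli_alt)
    next
      case True
      have hk: "h bk bk = \<i> ^ c * sg z bk" if "length bk = n" for bk
        using cxz that True xr_self_iff[of x bk] by (simp add: pauli_alt)
      have nz: "\<i> ^ c * sg z bk \<noteq> 0" for bk by (simp add: sg_nz)
      have u: "\<i> ^ c * sg z bk = 1" if bkL: "bk \<in> LS n S" for bk
      proof -
        have "h bk bk = 0 \<or> h bk bk = 1" using LS_Lp bkL hS unfolding Lp_def by blast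
        then show ?thesis using hk[OF LS_len[OF bkL]] nz[of bk] by auto
      qed
      have u1: "\<i> ^ c * sg z b1 = 1" and u2: "\<i> ^ c * sg z b2 = 1" and u3: "\<i> ^ c * sg z b3 = 1"
        using u assms by auto
      have "sg z b2 = sg z b1" using u1 u2 by (metis mult_cancel_left mult_zero_left zero_neq_one)
      moreover have "sg z b3 = sg z b1" using u1 u3 by (metis mult_cancel_left mult_zero_left zero_neq_one)
      ultimately have "\<i> ^ c * sg z b = (\<i> ^ c * sg z b1) * (sg z b1 * sg z b1)"
        unfolding b_def using l cxz by (simp add: sg_xr mult.assoc)
      then show ?thesis using hk[OF lb] u1 sg_sq by simp
    qed
  qed
  then have "b \<in> Lp" unfolding Lp_def using lb by auto
  then show ?thesis using LS_eq b_def by simp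
qed

lemma zeros_GX: "replicate n False \<in> GX n S"
proof -
  have "idm n = pauli_mat n 0 (replicate n False) (replicate n False)"
  proof (intro ext)
    fix b d
    have "filter id (map2 (\<and>) (replicate n False) d) = []"
      by (auto simp: filter_empty_conv set_zip)
    then have "sg (replicate n False) d = 1" unfolding sg_def by simp
    then show "idm n b d = pauli_mat n 0 (replicate n False) (replicate n False) b d"
      by (auto simp: idm_def pauli_alt xr_zeros)
  qed
  then have "pauli_mat n 0 (replicate n False) (replicate n False) \<in> S" using S_idm by simp
  then show ?thesis unfolding GX_def by (intro CollectI exI[of _ 0] exI[of _ "replicate n False"]) simp
qed

lemma GX_len: "x \<in> GX n S \<Longrightarrow> length x = n" unfolding GX_def by auto

lemma GX_xr: assumes "x \<in> GX n S" "x' \<in> GX n S" shows "xr x x' \<in> GX n S"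
proof -
  obtain c z where g: "length x = n" "length z = n" "pauli_mat n c x z \<in> S" using assms(1) unfolding GX_def by auto
  obtain c' z' where g': "length x' = n" "length z' = n" "pauli_mat n c' x' z' \<in> S" using assms(2) unfolding GX_def by auto
  define M where "M = mmult n (pauli_mat n c x z) (pauli_mat n c' x' z')"
  have MS: "M \<in> S" unfolding M_def using S_mult g(3) g'(3) by blast
  obtain C X Z where M': "length X = n" "length Z = n" "M = pauli_mat n C X Z" using S_pauli[OF SG MS] by blast
  define zs where "zs = replicate n False"
  have lzs: "length zs = n" by (simp add: zs_def)
  have "M zs (xr x' x) = (\<Sum>e\<in>bitstrs n. if e = x then \<i> ^ c * sg z x * pauli_mat n c' x' z' e (xr x' x) else 0)"
    unfolding M_def mmult_def by (rule sum.cong) (auto simp: pauli_alt g lzs zs_def xr_zeros2)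
  also have "\<dots> = \<i> ^ c * sg z x * pauli_mat n c' x' z' x (xr x' x)" by (rule sum_single[OF g(1)])
  also have "\<dots> \<noteq> 0" using g g' by (simp add: pauli_alt sg_nz)
  finally have "M zs (xr x' x) \<noteq> 0" .
  then have "xr x' x = xr X zs" using M' lzs by (simp add: pauli_alt split: if_splits)
  then have "X = xr x x'" using M'(1) lzs xr_zeros2[OF M'(1)] by (simp add: zs_def xr_comm)
  then show ?thesis unfolding GX_def using M' MS by auto
qed

end



definition xclosed :: "nat \<Rightarrow> bool list set \<Rightarrow> bool" where
  "xclosed n A \<longleftrightarrow> replicate n False \<in> A \<and> (\<forall>a\<in>A. length a = n) \<and> (\<forall>a\<in>A. \<forall>b\<in>A. xr a b \<in> A)"

lemma xclosed_finite: "xclosed n A \<Longrightarrow> finite A"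
  unfolding xclosed_def by (rule finite_subset[OF _ finite_bitstrs[of n]]) (auto simp: bitstrs_def)

lemma pair_card:
  assumes X: "xclosed n A" and w: "w \<in> A" and QR: "\<And>a. a \<in> A \<Longrightarrow> Q a = R (xr w a)"
  shows "card {a\<in>A. Q a} = card {a\<in>A. R a}"
proof -
  have len: "\<And>a. a \<in> A \<Longrightarrow> length a = n" and cl: "\<And>a b. a \<in> A \<Longrightarrow> b \<in> A \<Longrightarrow> xr a b \<in> A"
    using X unfolding xclosed_def by auto
  have lw: "length w = n" using len w .
  have inv: "xr w (xr w a) = a" if "a \<in> A" for a using xr_xr lw len[OF that] by simp
  have "bij_betw (xr w) {a\<in>A. Q a} {a\<in>A. R a}"
  proof (rule bij_betw_byWitness[where f'="xr w"])
    show "\<forall>a\<in>{a \<in> A. Q a}. xr w (xr w a) = a" using inv by auto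
    show "\<forall>a\<in>{a \<in> A. R a}. xr w (xr w a) = a" using inv by auto
    show "xr w ` {a \<in> A. Q a} \<subseteq> {a \<in> A. R a}" using QR cl w by auto
    show "xr w ` {a \<in> A. R a} \<subseteq> {a \<in> A. Q a}"
    proof
      fix c assume "c \<in> xr w ` {a \<in> A. R a}"
      then obtain a where a: "a \<in> A" "R a" "c = xr w a" by auto
      have cA: "c \<in> A" using cl[OF w a(1)] a(3) by simp
      have "Q c = R (xr w c)" using QR[OF cA] .
      also have "xr w c = a" using a(3) inv[OF a(1)] by simp
      finally show "c \<in> {a \<in> A. Q a}" using cA a(2) by simp
    qed
  qed
  then show ?thesis by (rule bij_betw_same_card)
qed

lemma half_card:
  assumes X: "xclosed n A" and w: "w \<in> A" "w ! j" and j: "j < n"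
  shows "card {a\<in>A. \<not> a ! j} = card {a\<in>A. a ! j}"
proof (rule pair_card[OF X w(1)])
  fix a assume "a \<in> A"
  then have "length a = n" "length w = n" using X w unfolding xclosed_def by auto
  then show "(\<not> a ! j) = (xr w a ! j)" using w(2) j by simp
qed

lemma card_split: "finite A \<Longrightarrow> card A = card {a\<in>A. P a} + card {a\<in>A. \<not> P a}"
proof -
  assume f: "finite A"
  have "A = {a\<in>A. P a} \<union> {a\<in>A. \<not> P a}" by auto
  then show ?thesis using f by (metis (no_types, lifting) card_Un_disjoint disjoint_iff finite_Un mem_Collect_eq)
qed

lemma pow2_card: "xclosed n A \<Longrightarrow> \<exists>k. card A = 2 ^ k"
proof (induction "card A" arbitrary: A rule: less_induct)
  case less
  note X = less.prems
  have len: "\<And>a. a \<in> A \<Longrightarrow> length a = n" and z: "replicate n False \<in> A"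
    and cl: "\<And>a b. a \<in> A \<Longrightarrow> b \<in> A \<Longrightarrow> xr a b \<in> A"
    using X unfolding xclosed_def by auto
  show ?case
  proof (cases "\<exists>w\<in>A. \<exists>j<n. w ! j")
    case False
    have "A = {replicate n False}"
    proof
      show "A \<subseteq> {replicate n False}"
      proof
        fix a assume a: "a \<in> A"
        have "a = replicate n False" using False a len[OF a] by (intro nth_equalityI) auto
        then show "a \<in> {replicate n False}" by simp
      qed
      show "{replicate n False} \<subseteq> A" using z by simp
    qed
    then show ?thesis by (intro exI[of _ 0]) simp
  next
    case True
    then obtain w j where w: "w \<in> A" "j < n" "w ! j" by blast
    define A0 where "A0 = {a\<in>A. \<not> a ! j}"
    have fin: "finite A" using xclosed_finite[OF X] .
    have X0: "xclosed n A0" unfolding xclosed_def A0_def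
      using z len cl w(2) by auto
    have c: "card A = 2 * card A0"
      using card_split[OF fin, of "\<lambda>a. \<not> a ! j"] half_card[OF X w(1) w(3) w(2)] unfolding A0_def by simp
    have "card A0 > 0" using X0 xclosed_finite[OF X0] unfolding xclosed_def by (auto simp: card_gt_0_iff)
    then have "card A0 < card A" using c by simp
    then obtain k where "card A0 = 2 ^ k" using less.hyps X0 by blast
    then show ?thesis using c by (intro exI[of _ "Suc k"]) simp
  qed
qed



lemma xr_assoc: "length a = length b \<Longrightarrow> length b = length c \<Longrightarrow> xr a (xr b c) = xr (xr a b) c"
  by (rule nth_equalityI) auto

lemma sum_ind: "finite A \<Longrightarrow> (\<Sum>a\<in>A. if P a then 1 else 0 :: real) = real (card {a\<in>A. P a})"
  by (simp add: sum.inter_filter[symmetric])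

lemma psi_diff: "length v = n \<Longrightarrow> length b0 = n \<Longrightarrow>
  psi n \<theta> (xr b0 v) - psi n \<theta> b0 = (\<Sum>j<n. if v ! j then (if b0 ! j then -1 else 1) * \<theta> j else 0)"
  unfolding psi_def by (simp add: sum_subtractf[symmetric]) (rule sum.cong, auto)

lemma psi_flip: "length x = n \<Longrightarrow> length b = n \<Longrightarrow>
  psi n \<theta> (xr x b) - psi n \<theta> b = (\<Sum>j<n. if x ! j then (if b ! j then - \<theta> j else \<theta> j) else 0)"
  unfolding psi_def by (simp add: sum_subtractf[symmetric]) (rule sum.cong, auto)

context
  fixes n :: nat and L G :: "bool list set" and \<theta> :: "nat \<Rightarrow> real" and b0 :: "bool list"
  assumes XG: "xclosed n G"
    and Llen: "\<And>b. b \<in> L \<Longrightarrow> length b = n" and b0L: "b0 \<in> L"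
    and LG: "\<And>b x. b \<in> L \<Longrightarrow> x \<in> G \<Longrightarrow> xr x b \<in> L"
    and Laff: "\<And>b1 b2 b3. b1 \<in> L \<Longrightarrow> b2 \<in> L \<Longrightarrow> b3 \<in> L \<Longrightarrow> xr b1 (xr b2 b3) \<in> L"
    and ph: "\<And>b x. b \<in> L \<Longrightarrow> x \<in> G \<Longrightarrow> psi n \<theta> (xr x b) - psi n \<theta> b \<in> \<int>"
    and cov: "\<And>j b. j < n \<Longrightarrow> b \<in> L \<Longrightarrow> b ! j \<noteq> b0 ! j \<Longrightarrow> \<exists>x\<in>G. x ! j"
begin

lemma Glen: "x \<in> G \<Longrightarrow> length x = n" using XG unfolding xclosed_def by auto

lemma C1: assumes bL: "b \<in> L" shows "real (card G) * (psi n \<theta> b - psi n \<theta> b0) \<in> \<int>"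
proof -
  define t where "t = (\<lambda>b j. if b ! j then - \<theta> j else \<theta> j)"
  define cG where "cG = (\<lambda>j. card {x\<in>G. x ! j})"
  have finG: "finite G" using xclosed_finite[OF XG] .
  define D where "D = (\<lambda>b. \<Sum>x\<in>G. psi n \<theta> (xr x b) - psi n \<theta> b)"
  have DZ: "D b' \<in> \<int>" if "b' \<in> L" for b' unfolding D_def using ph[OF that] by auto
  have Deq: "D b' = (\<Sum>j<n. real (cG j) * t b' j)" if "b' \<in> L" for b'
  proof -
    have "D b' = (\<Sum>x\<in>G. \<Sum>j<n. if x ! j then t b' j else 0)"
      unfolding D_def t_def using Glen Llen[OF that] by (intro sum.cong) (auto simp: psi_flip)
    also have "\<dots> = (\<Sum>j<n. \<Sum>x\<in>G. if x ! j then t b' j else 0)" by (rule sum.swap)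
    also have "\<dots> = (\<Sum>j<n. real (cG j) * t b' j)"
    proof (rule sum.cong[OF refl])
      fix j
      have "(\<Sum>x\<in>G. if x ! j then t b' j else 0) = (\<Sum>x\<in>G. (if x ! j then 1 else 0) * t b' j)"
        by (rule sum.cong) auto
      also have "\<dots> = real (cG j) * t b' j"
        unfolding sum_distrib_right[symmetric] cG_def using sum_ind[OF finG] by simp
      finally show "(\<Sum>x\<in>G. if x ! j then t b' j else 0) = real (cG j) * t b' j" .
    qed
    finally show ?thesis .
  qed
  have trm: "real (cG j) * (t b0 j - t b j) = real (card G) * ((if b ! j then \<theta> j else 0) - (if b0 ! j then \<theta> j else 0))"
    if j: "j < n" for j
  proof (cases "b ! j = b0 ! j")
    case True then show ?thesis unfolding t_def by simp
  next
    case False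
    obtain w where w: "w \<in> G" "w ! j" using cov[OF j bL False] by blast
    have "card G = 2 * cG j"
      using card_split[OF finG, of "\<lambda>a. a ! j"] half_card[OF XG w j] unfolding cG_def by simp
    then show ?thesis unfolding t_def using False by (cases "b ! j") (auto simp: algebra_simps)
  qed
  have "D b0 - D b = (\<Sum>j<n. real (cG j) * (t b0 j - t b j))"
    using Deq[OF b0L] Deq[OF bL] by (simp add: sum_subtractf[symmetric] algebra_simps)
  also have "\<dots> = (\<Sum>j<n. real (card G) * ((if b ! j then \<theta> j else 0) - (if b0 ! j then \<theta> j else 0)))"
    using trm by (intro sum.cong) auto
  also have "\<dots> = real (card G) * (psi n \<theta> b - psi n \<theta> b0)"
    unfolding psi_def by (simp add: sum_distrib_left[symmetric] sum_subtractf)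
  finally show ?thesis using DZ[OF b0L] DZ[OF bL] by (metis Ints_diff)
qed


definition "VV = xr b0 ` L"
definition "sgnb j = (if b0 ! j then -1 else (1::real))"
definition "fv v = psi n \<theta> (xr b0 v) - psi n \<theta> b0"
definition "eqv j k = (\<forall>v\<in>VV. v ! j = v ! k)"
definition "covV j = (\<exists>v\<in>VV. v ! j)"
definition "qq j = (\<Sum>k<n. if eqv k j then sgnb k * \<theta> k else 0)"
definition "rep j = (j < n \<and> covV j \<and> (\<forall>i<j. \<not> eqv i j))"
definition "eta j = (if rep j then sgnb j * qq j else 0)"

lemma b0len: "length b0 = n" using Llen[OF b0L] .

lemma VV_len: "v \<in> VV \<Longrightarrow> length v = n" unfolding VV_def using Llen b0len by auto

lemma VV_L: "v \<in> VV \<Longrightarrow> xr b0 v \<in> L"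
  unfolding VV_def using Llen b0len xr_xr by auto

lemma L_VV: "b \<in> L \<Longrightarrow> xr b0 b \<in> VV" unfolding VV_def by auto

lemma XV: "xclosed n VV"
  unfolding xclosed_def
proof (intro conjI ballI)
  have "xr b0 b0 = replicate n False" using b0len by (intro nth_equalityI) auto
  then show "replicate n False \<in> VV" using b0L unfolding VV_def by (metis image_eqI)
  show "length a = n" if "a \<in> VV" for a using VV_len that .
  fix a b assume a: "a \<in> VV" and b: "b \<in> VV"
  obtain b1 where b1: "b1 \<in> L" "a = xr b0 b1" using a unfolding VV_def by auto
  obtain b2 where b2: "b2 \<in> L" "b = xr b0 b2" using b unfolding VV_def by auto
  have l: "length b1 = n" "length b2 = n" using b1 b2 Llen by auto
  have "xr a b = xr b0 (xr b1 (xr b0 b2))"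
    using l b0len unfolding b1(2) b2(2) by (intro nth_equalityI) auto
  then show "xr a b \<in> VV" unfolding VV_def using Laff[OF b1(1) b0L b2(1)] by auto
qed

lemma fv_eq: "v \<in> VV \<Longrightarrow> fv v = (\<Sum>k<n. if v ! k then sgnb k * \<theta> k else 0)"
  unfolding fv_def sgnb_def using psi_diff[OF VV_len b0len] by simp

lemma fvZ: "v \<in> VV \<Longrightarrow> real (card G) * fv v \<in> \<int>"
  unfolding fv_def using C1[OF VV_L] by simp

lemma inner_count: assumes j: "j < n" "covV j" and k: "k < n"
  shows "(\<Sum>v\<in>VV. if v ! k then (if v ! j then -1 else 1) else 0 :: real)
         = (if eqv k j then - real (card {v\<in>VV. v ! j}) else 0)"
proof -
  have finV: "finite VV" using xclosed_finite[OF XV] .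
  have "(\<Sum>v\<in>VV. if v ! k then (if v ! j then -1 else 1) else 0 :: real)
     = (\<Sum>v\<in>VV. if v ! k \<and> \<not> v ! j then 1 else 0) - (\<Sum>v\<in>VV. if v ! k \<and> v ! j then 1 else 0)"
    by (simp add: sum_subtractf[symmetric]) (rule sum.cong, auto)
  also have "\<dots> = real (card {v\<in>VV. v ! k \<and> \<not> v ! j}) - real (card {v\<in>VV. v ! k \<and> v ! j})"
    using sum_ind[OF finV] by simp
  also have "\<dots> = (if eqv k j then - real (card {v\<in>VV. v ! j}) else 0)"
  proof (cases "eqv k j")
    case True
    then have e1: "{v\<in>VV. v ! k \<and> \<not> v ! j} = {}" and e2: "{v\<in>VV. v ! k \<and> v ! j} = {v\<in>VV. v ! j}"
      unfolding eqv_def by auto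
    show ?thesis using True unfolding e1 e2 by simp
  next
    case False
    obtain w0 where w0: "w0 \<in> VV" "w0 ! j" using j(2) unfolding covV_def by auto
    obtain u where u: "u \<in> VV" "u ! k \<noteq> u ! j" using False unfolding eqv_def by auto
    have "\<exists>w\<in>VV. w ! j \<and> \<not> w ! k"
    proof (cases "u ! j")
      case True then show ?thesis using u by auto
    next
      case uj: False
      show ?thesis
      proof (cases "w0 ! k")
        case False then show ?thesis using w0 by auto
      next
        case True
        have "xr w0 u \<in> VV" using XV w0 u unfolding xclosed_def by auto
        moreover have "xr w0 u ! j" "\<not> xr w0 u ! k"
          using VV_len[OF w0(1)] VV_len[OF u(1)] j k w0 u uj True by auto
        ultimately show ?thesis by blast
      qed
    qed
    then obtain w where w: "w \<in> VV" "w ! j" "\<not> w ! k" by blast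
    have "card {v\<in>VV. v ! k \<and> \<not> v ! j} = card {v\<in>VV. v ! k \<and> v ! j}"
    proof (rule pair_card[OF XV w(1)])
      fix a assume "a \<in> VV"
      then show "(a ! k \<and> \<not> a ! j) = (xr w a ! k \<and> xr w a ! j)"
        using VV_len[OF w(1)] VV_len j k w by auto
    qed
    then show ?thesis using False by simp
  qed
  finally show ?thesis .
qed

lemma char_sum: assumes j: "j < n" "covV j"
  shows "(\<Sum>v\<in>VV. (if v ! j then -1 else 1) * fv v) = - real (card {v\<in>VV. v ! j}) * qq j"
proof -
  have "(\<Sum>v\<in>VV. (if v ! j then -1 else 1) * fv v)
      = (\<Sum>v\<in>VV. \<Sum>k<n. (if v ! k then (if v ! j then -1 else 1) else 0) * (sgnb k * \<theta> k))"
  proof (rule sum.cong[OF refl])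
    fix v assume v: "v \<in> VV"
    show "(if v ! j then -1 else 1) * fv v = (\<Sum>k<n. (if v ! k then (if v ! j then -1 else 1) else 0) * (sgnb k * \<theta> k))"
      unfolding fv_eq[OF v] sum_distrib_left by (rule sum.cong) auto
  qed
  also have "\<dots> = (\<Sum>k<n. \<Sum>v\<in>VV. (if v ! k then (if v ! j then -1 else 1) else 0) * (sgnb k * \<theta> k))"
    by (rule sum.swap)
  also have "\<dots> = (\<Sum>k<n. (if eqv k j then - real (card {v\<in>VV. v ! j}) else 0) * (sgnb k * \<theta> k))"
    by (rule sum.cong[OF refl]) (simp add: sum_distrib_right[symmetric] inner_count[OF j])
  also have "\<dots> = - real (card {v\<in>VV. v ! j}) * qq j"
    unfolding qq_def sum_distrib_left by (rule sum.cong) auto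
  finally show ?thesis .
qed


lemma qZ: assumes j: "j < n" "covV j"
  shows "real (card G) * real (card VV) * qq j \<in> \<int>"
proof -
  have finV: "finite VV" using xclosed_finite[OF XV] .
  define h where "h = card {v\<in>VV. v ! j}"
  obtain w0 where w0: "w0 \<in> VV" "w0 ! j" using j(2) unfolding covV_def by auto
  have cV: "card VV = 2 * h"
    using card_split[OF finV, of "\<lambda>a. a ! j"] half_card[OF XV w0(1) w0(2) j(1)] unfolding h_def by simp
  have "(\<Sum>v\<in>VV. (if v ! j then -1 else 1) * (real (card G) * fv v)) \<in> \<int>"
  proof (rule Ints_sum)
    fix v assume "v \<in> VV"
    then have "real (card G) * fv v \<in> \<int>" using fvZ by blast
    then show "(if v ! j then -1 else 1) * (real (card G) * fv v) \<in> \<int>" by auto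
  qed
  also have "(\<Sum>v\<in>VV. (if v ! j then -1 else 1) * (real (card G) * fv v))
      = real (card G) * (\<Sum>v\<in>VV. (if v ! j then -1 else 1) * fv v)"
    by (simp add: sum_distrib_left algebra_simps)
  also have "\<dots> = - (real (card G) * real h * qq j)" using char_sum[OF j] unfolding h_def by simp
  finally have "real (card G) * real h * qq j \<in> \<int>" by (metis Ints_minus minus_minus)
  then have "2 * (real (card G) * real h * qq j) \<in> \<int>" by auto
  then show ?thesis using cV by (simp add: algebra_simps)
qed

lemma etaZ: "real (card G) * real (card VV) * eta j \<in> \<int>"
proof (cases "rep j")
  case True
  then have j: "j < n" "covV j" unfolding rep_def by auto
  have "sgnb j * (real (card G) * real (card VV) * qq j) \<in> \<int>"
    using qZ[OF j] unfolding sgnb_def by auto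
  then show ?thesis using True unfolding eta_def by (simp add: algebra_simps)
next
  case False then show ?thesis unfolding eta_def by simp
qed

lemma eqv_refl: "eqv k k" unfolding eqv_def by simp
lemma eqv_sym: "eqv j k \<Longrightarrow> eqv k j" unfolding eqv_def by simp
lemma eqv_trans: "eqv i j \<Longrightarrow> eqv j k \<Longrightarrow> eqv i k" unfolding eqv_def by simp

lemma rep_set: assumes v: "v \<in> VV" and k: "k < n"
  shows "{j\<in>{..<n}. v ! j \<and> rep j \<and> eqv k j} = (if v ! k then {LEAST i. eqv i k} else {})"
proof (cases "v ! k")
  case False
  then show ?thesis using v unfolding eqv_def by auto
next
  case True
  define r where "r = (LEAST i. eqv i k)"
  have rk: "eqv r k" unfolding r_def by (rule LeastI[of _ k]) (rule eqv_refl)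
  have rle: "r \<le> k" unfolding r_def by (rule Least_le) (rule eqv_refl)
  have rmin: "\<not> eqv i k" if "i < r" for i using that not_less_Least unfolding r_def by blast
  have "r \<in> {j\<in>{..<n}. v ! j \<and> rep j \<and> eqv k j}"
  proof -
    have vr: "v ! r" using rk True v unfolding eqv_def by auto
    have nr: "\<forall>i<r. \<not> eqv i r"
    proof (intro allI impI notI)
      fix i assume "i < r" "eqv i r"
      then show False using rmin eqv_trans[OF _ rk] by blast
    qed
    have "rep r" unfolding rep_def covV_def
      using rle k vr v nr by auto
    then show ?thesis using rle k vr eqv_sym[OF rk] by auto
  qed
  moreover have "j = r" if "j \<in> {j\<in>{..<n}. v ! j \<and> rep j \<and> eqv k j}" for j
  proof -
    from that have rj: "rep j" and kj: "eqv k j" by auto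
    have "r \<le> j" unfolding r_def by (rule Least_le) (rule eqv_sym[OF kj])
    moreover have "\<not> r < j"
    proof
      assume "r < j"
      moreover have "eqv r j" using eqv_trans[OF rk kj] .
      ultimately show False using rj unfolding rep_def by blast
    qed
    ultimately show "j = r" by simp
  qed
  ultimately have "{j\<in>{..<n}. v ! j \<and> rep j \<and> eqv k j} = {r}" by blast
  then show ?thesis using True by (simp only: r_def if_True)
qed

lemma key: assumes v: "v \<in> VV"
  shows "(\<Sum>j<n. if v ! j then sgnb j * eta j else 0) = fv v"
proof -
  have ss: "sgnb j * sgnb j = 1" for j unfolding sgnb_def by simp
  have "(\<Sum>j<n. if v ! j then sgnb j * eta j else 0) = (\<Sum>j<n. if v ! j \<and> rep j then qq j else 0)"
    unfolding eta_def by (rule sum.cong) (auto simp: mult.assoc[symmetric] ss)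
  also have "\<dots> = (\<Sum>j<n. \<Sum>k<n. if v ! j \<and> rep j \<and> eqv k j then sgnb k * \<theta> k else 0)"
    unfolding qq_def by (rule sum.cong) (auto intro: sum.cong)
  also have "\<dots> = (\<Sum>k<n. \<Sum>j<n. if v ! j \<and> rep j \<and> eqv k j then sgnb k * \<theta> k else 0)"
    by (rule sum.swap)
  also have "\<dots> = (\<Sum>k<n. if v ! k then sgnb k * \<theta> k else 0)"
  proof (rule sum.cong[OF refl])
    fix k assume "k \<in> {..<n}"
    then have k: "k < n" by simp
    have "(\<Sum>j<n. if v ! j \<and> rep j \<and> eqv k j then sgnb k * \<theta> k else 0)
        = (\<Sum>j\<in>{j\<in>{..<n}. v ! j \<and> rep j \<and> eqv k j}. sgnb k * \<theta> k)"
      by (simp only: sum.inter_filter[OF finite_lessThan])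
    also have "\<dots> = (if v ! k then sgnb k * \<theta> k else 0)"
      unfolding rep_set[OF v k] by simp
    finally show "(\<Sum>j<n. if v ! j \<and> rep j \<and> eqv k j then sgnb k * \<theta> k else 0) = (if v ! k then sgnb k * \<theta> k else 0)" .
  qed
  also have "\<dots> = fv v" using fv_eq[OF v] by simp
  finally show ?thesis .
qed

lemma core_eq: assumes bL: "b \<in> L"
  shows "psi n \<theta> b - psi n \<theta> b0 = psi n eta b - psi n eta b0"
proof -
  define v where "v = xr b0 b"
  have vV: "v \<in> VV" using L_VV[OF bL] v_def by simp
  have bv: "xr b0 v = b" unfolding v_def using xr_xr b0len Llen[OF bL] by simp
  have "psi n eta b - psi n eta b0 = (\<Sum>j<n. if v ! j then sgnb j * eta j else 0)"
  proof -
    have "psi n eta (xr b0 v) - psi n eta b0 = (\<Sum>j<n. if v ! j then (if b0 ! j then -1 else 1) * eta j else 0)"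
      by (rule psi_diff[OF VV_len[OF vV] b0len])
    then show ?thesis unfolding bv sgnb_def .
  qed
  also have "\<dots> = fv v" using key[OF vV] .
  also have "\<dots> = psi n \<theta> b - psi n \<theta> b0" unfolding fv_def bv ..
  finally show ?thesis by (rule sym)
qed


lemma core_exists: "\<exists>(a::nat \<Rightarrow> int) (K::nat). \<forall>b\<in>L.
   psi n \<theta> b - psi n \<theta> b0 = psi n (\<lambda>j. real_of_int (a j) / 2 ^ K) b - psi n (\<lambda>j. real_of_int (a j) / 2 ^ K) b0"
proof -
  obtain mG where mG: "card G = 2 ^ mG" using pow2_card[OF XG] by blast
  obtain mV where mV: "card VV = 2 ^ mV" using pow2_card[OF XV] by blast
  define K where "K = mG + mV"
  have eZ: "(2::real) ^ K * eta j \<in> \<int>" for j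
    using etaZ[of j] unfolding K_def mG mV by (simp add: power_add)
  define a where "a = (\<lambda>j. \<lfloor>(2::real) ^ K * eta j\<rfloor>)"
  have "real_of_int (a j) = 2 ^ K * eta j" for j
    unfolding a_def using eZ[of j] by (metis Ints_cases floor_of_int)
  then have "(\<lambda>j. real_of_int (a j) / 2 ^ K) = eta" by (intro ext) simp
  then show ?thesis using core_eq by (intro exI[of _ a] exI[of _ K]) simp
qed

end



lemma cis_int: assumes "cis (pi * x) = cis (pi * y)" shows "x - y \<in> \<int>"
proof -
  have "sin (pi * x) = sin (pi * y) \<and> cos (pi * x) = cos (pi * y)"
    using arg_cong[OF assms, of Re] arg_cong[OF assms, of Im] by simp
  then obtain m :: int where "pi * x = pi * y + 2 * pi * m" using sin_cos_eq_iff by blast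
  then have "pi * x = pi * (y + 2 * m)" by (simp add: algebra_simps)
  then have "x = y + 2 * m" using pi_neq_zero by simp
  then have "x - y = of_int (2 * m)" by simp
  then show ?thesis by (metis Ints_of_int)
qed

theorem proposition7:
  fixes n :: nat and S :: "qmat set" and \<theta> :: "nat \<Rightarrow> real"
  assumes "stabilizer_group n S"
    and "nontrivial_code n S"
    and "implements_nontrivial_logical n S (zrot n \<theta>)"
  shows "\<exists>(a :: nat \<Rightarrow> int) (k :: nat) (c :: complex). cmod c = 1 \<and>
           (\<forall>v\<in>codespace n S.
              mapply n (zrot n \<theta>) v =
              (\<lambda>b. c * mapply n (zrot n (\<lambda>j. real_of_int (a j) / 2 ^ k)) v b))"
proof (cases "LS n S = {}")
  case True
  have "\<forall>v\<in>codespace n S. mapply n (zrot n \<theta>) v =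
      (\<lambda>b. 1 * mapply n (zrot n (\<lambda>j. real_of_int 0 / 2 ^ 0)) v b)"
  proof (intro ballI ext)
    fix v b assume v: "v \<in> codespace n S"
    have "v b = 0" using True v unfolding LS_def by auto
    then show "mapply n (zrot n \<theta>) v b = 1 * mapply n (zrot n (\<lambda>j. real_of_int 0 / 2 ^ 0)) v b"
      by (simp add: mapply_zrot)
  qed
  then show ?thesis by (intro exI[of _ "\<lambda>_. 0"] exI[of _ 0] exI[of _ 1]) simp
next
  case False
  then obtain b0 where b0: "b0 \<in> LS n S" by (metis equals0I)
  note SG = assms(1)
  have XG: "xclosed n (GX n S)"
    unfolding xclosed_def
  proof (intro conjI ballI)
    show "replicate n False \<in> GX n S" by (rule zeros_GX[OF SG])
    show "length x = n" if "x \<in> GX n S" for x using that by (rule GX_len[OF SG])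
    show "xr x y \<in> GX n S" if "x \<in> GX n S" "y \<in> GX n S" for x y using that by (rule GX_xr[OF SG])
  qed
  have ph: "psi n \<theta> (xr x b) - psi n \<theta> b \<in> \<int>" if "b \<in> LS n S" "x \<in> GX n S" for b x
    using cis_int[OF phase_inv[OF assms(3) that]] .
  have cov: "\<exists>x\<in>GX n S. x ! j" if "j < n" "b \<in> LS n S" "b ! j \<noteq> b0 ! j" for j b
    using coverage[OF SG assms(2) that(1) _ that(2) b0] that(3) by blast
  have Llen: "\<And>b. b \<in> LS n S \<Longrightarrow> length b = n" by (rule LS_len)
  have LG: "\<And>b x. b \<in> LS n S \<Longrightarrow> x \<in> GX n S \<Longrightarrow> xr x b \<in> LS n S" by (rule LS_xr)
  have Laff: "\<And>b1 b2 b3. b1 \<in> LS n S \<Longrightarrow> b2 \<in> LS n S \<Longrightarrow> b3 \<in> LS n S \<Longrightarrow> xr b1 (xr b2 b3) \<in> LS n S"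
    by (rule LS_affine[OF SG])
  obtain a K where aK: "\<forall>b\<in>LS n S. psi n \<theta> b - psi n \<theta> b0 =
      psi n (\<lambda>j. real_of_int (a j) / 2 ^ K) b - psi n (\<lambda>j. real_of_int (a j) / 2 ^ K) b0"
    apply (rule exE[OF core_exists[of n "GX n S" "LS n S" b0 \<theta>]])
    apply (rule XG)
    apply (rule Llen, assumption)
    apply (rule b0)
    apply (rule LG, assumption+)
    apply (rule Laff, assumption+)
    apply (rule ph, assumption+)
    apply (rule cov, assumption+)
    apply blast
    done
  define \<eta> where "\<eta> = (\<lambda>j. real_of_int (a j) / 2 ^ K)"
  define c where "c = cis (pi * (psi n \<theta> b0 - psi n \<eta> b0))"
  have "\<forall>v\<in>codespace n S. mapply n (zrot n \<theta>) v = (\<lambda>b. c * mapply n (zrot n \<eta>) v b)"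
  proof (intro ballI ext)
    fix v b assume v: "v \<in> codespace n S"
    show "mapply n (zrot n \<theta>) v b = c * mapply n (zrot n \<eta>) v b"
    proof (cases "length b = n \<and> v b \<noteq> 0")
      case False
      then have "v b = 0 \<or> length b \<noteq> n" by auto
      then show ?thesis by (auto simp: mapply_zrot)
    next
      case True
      then have bL: "b \<in> LS n S" using v unfolding LS_def by auto
      have e: "psi n \<theta> b - psi n \<theta> b0 = psi n \<eta> b - psi n \<eta> b0" using aK bL unfolding \<eta>_def by blast
      have "psi n \<theta> b = (psi n \<theta> b0 - psi n \<eta> b0) + psi n \<eta> b" using e by linarith
      then have "cis (pi * psi n \<theta> b) = c * cis (pi * psi n \<eta> b)"
        unfolding c_def by (simp add: cis_mult distrib_left)
      then show ?thesis using True by (simp add: mapply_zrot)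
    qed
  qed
  moreover have "cmod c = 1" unfolding c_def by simp
  ultimately show ?thesis unfolding \<eta>_def by blast
qed


end
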